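(* Let $g:\mathbb{R}^N\to\mathbb{R}\cup\{+\infty\}$ be proper and lower semi-continuous, let $f:\mathbb{R}^N\to\mathbb{R}$ be continuously differentiable such that, for some $\mathbf{L}\in\mathbb{S}_{++}(N)$, the gradient of $f\circ\mathbf{L}^{-1/2}$ is $1$-Lipschitz continuous, and assume $f^g:=f+g$ is bounded from below. Fix $a>0$, $x_0\in\mathbb{R}^N$, and a sequence of matrices $\mathbf{D}_k\in\mathbb{R}^{N\times R}$. For $k\ge0$ and $\boldsymbol\beta\in\mathbb{R}^R$ let $y^{(\boldsymbol\beta)}_k:=x_k+\mathbf{D}_k\boldsymbol\beta$ and $\ell(x;y):=g(x)+f(y)+\langle\nabla f(y),x-y\rangle$. Suppose the sequences $(x_k)_{k}$, $(\boldsymbol\beta_k)_k$, and symmetric matrices $(\mathbf{L}_k)_k$, $(\mathbf{T}_k)_k$ satisfy for all $k\ge0$: $$\ell(x_{k+1};y_k^{(\boldsymbol\beta_k)})+\tfrac12\|x_{k+1}-y_k^{(\boldsymbol\beta_k)}\|_{\mathbf{T}_k}^2\le f^g(x_k),$$ $\mathbf{T}_k-\mathbf{L}_k-a\mathbf{I}\in\mathbb{S}_+(N)$, and $$f(x_{k+1})\le f(y_k^{(\boldsymbol\beta_k)})+\langle\nabla f(y_k^{(\boldsymbol\beta_k)}),x_{k+1}-y_k^{(\boldsymbol\beta_k)}\rangle+\tfrac12\|x_{k+1}-y_k^{(\boldsymbol\beta_k)}\|_{\mathbf{L}_k}^2.$$ Suppose $(\mathbf{T}_k)_{k\in\mathbb{N}}$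 is bounded. Then $(f^g(x_k))_{k\in\mathbb{N}}$ is non-increasing. If, additionally, $g$ is continuous on its domain and $\operatorname{dist}(0,\partial f^g(x_{k+1}))\to0$ as $k\to\infty$, then every limit point of $(x_{k+1})_{k\in\mathbb{N}}$ is a stationary point of $f^g$.
   Context: $\mathbb{S}_{+}(N)$ (resp. $\mathbb{S}_{++}(N)$) denotes the set of symmetric positive semi-definite (resp. positive definite) $N\times N$ real matrices; $\mathbf{I}$ is the identity; $\|x\|_{\mathbf{V}}^2:=\langle x,\mathbf{V}x\rangle$. The Fréchet subdifferential $\hat\partial h(\bar x)$ of $h:\mathbb{R}^N\to\mathbb{R}\cup\{+\infty\}$ at $\bar x\in\operatorname{dom}h$ is the set of $v$ with $\liminf_{x\to\bar x,x\ne\bar x}\frac{h(x)-h(\bar x)-\langle v,x-\bar x\rangle}{\|x-\bar x\|}\ge0$; the limiting subdifferential $\partial h(\bar x)$ is the set of $v$ for which there exist $x_k\to\bar x$ with $h(x_k)\to h(\bar x)$ and $v_k\in\hat\partial h(x_k)$ with $v_k\to v$ (both empty outside $\operatorname{dom}h$); $\operatorname{dist}(0,\emptyset):=+\infty$. A stationary point of $h$ is a point $\bar x$ with $0\in\partial h(\bar x)$. *)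

theory Defs
  imports "HOL-Analysis.Analysis" "HOL-Library.Extended_Real"
begin

definition psd_mat :: "real^'n^'n \<Rightarrow> bool" where
  "psd_mat M \<longleftrightarrow> transpose M = M \<and> (\<forall>x. 0 \<le> x \<bullet> (M *v x))"

definition pd_mat :: "real^'n^'n \<Rightarrow> bool" where
  "pd_mat M \<longleftrightarrow> transpose M = M \<and> (\<forall>x. x \<noteq> 0 \<longrightarrow> 0 < x \<bullet> (M *v x))"

definition wnorm2 :: "real^'n^'n \<Rightarrow> real^'n \<Rightarrow> real" where
  "wnorm2 V x = x \<bullet> (V *v x)"

definition inv_sqrt_mat :: "real^'n^'n \<Rightarrow> real^'n^'n" where
  "inv_sqrt_mat L = (THE S. pd_mat S \<and> S ** S = matrix_inv L)"

definition lsc :: "('a::topological_space \<Rightarrow> ereal) \<Rightarrow> bool" where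
  "lsc h \<longleftrightarrow> (\<forall>x. h x \<le> Liminf (at x) h)"

definition proper_fun :: "('a \<Rightarrow> ereal) \<Rightarrow> bool" where
  "proper_fun h \<longleftrightarrow> (\<forall>x. h x \<noteq> -\<infinity>) \<and> (\<exists>x. h x \<noteq> \<infinity>)"

definition edom :: "('a \<Rightarrow> ereal) \<Rightarrow> 'a set" where
  "edom h = {x. h x < \<infinity>}"

definition frechet_subdiff :: "(real^'n \<Rightarrow> ereal) \<Rightarrow> real^'n \<Rightarrow> (real^'n) set" where
  "frechet_subdiff h xb = {v. xb \<in> edom h \<and>
     0 \<le> Liminf (at xb) (\<lambda>x. (h x - h xb - ereal (v \<bullet> (x - xb))) / ereal (norm (x - xb)))}"

definition limiting_subdiff :: "(real^'n \<Rightarrow> ereal) \<Rightarrow> real^'n \<Rightarrow> (real^'n) set" where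
  "limiting_subdiff h xb = {v. xb \<in> edom h \<and>
     (\<exists>xs vs. xs \<longlonglongrightarrow> xb \<and> (\<lambda>k. h (xs k)) \<longlonglongrightarrow> h xb \<and>
        (\<forall>k. vs k \<in> frechet_subdiff h (xs k)) \<and> vs \<longlonglongrightarrow> v)}"

definition dist0 :: "(real^'n) set \<Rightarrow> ereal" where
  "dist0 S = (if S = {} then \<infinity> else ereal (infdist 0 S))"

definition stationary :: "(real^'n \<Rightarrow> ereal) \<Rightarrow> real^'n \<Rightarrow> bool" where
  "stationary h xb \<longleftrightarrow> 0 \<in> limiting_subdiff h xb"

definition limit_point :: "(nat \<Rightarrow> 'a::topological_space) \<Rightarrow> 'a \<Rightarrow> bool" where
  "limit_point s z \<longleftrightarrow> (\<exists>r. strict_mono r \<and> (s \<circ> r) \<longlonglongrightarrow> z)"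

end

theory Submission
  imports Defs
begin


lemma inv_lim: "(\<lambda>k. 1 / (real k + 1)) \<longlonglongrightarrow> 0"
  using LIMSEQ_inverse_real_of_nat by (simp add: divide_inverse add.commute)

lemma diag:
  fixes h :: "real^'n \<Rightarrow> ereal"
  assumes hm: "\<forall>x. h x \<noteq> -\<infinity>" and p: "p \<longlonglongrightarrow> z" and hp: "(\<lambda>k. h (p k)) \<longlonglongrightarrow> h z"
    and z: "z \<in> edom h"
    and v: "\<forall>k. v k \<in> limiting_subdiff h (p k)" and v0: "v \<longlonglongrightarrow> 0"
  shows "0 \<in> limiting_subdiff h z"
proof -
  have ex: "\<exists>q w c. w \<in> frechet_subdiff h q \<and> norm (q - p k) < 1/(real k+1) \<and> h q = ereal c
     \<and> \<bar>c - real_of_ereal (h (p k))\<bar> < 1/(real k+1) \<and> norm (w - v k) < 1/(real k+1)" for k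
  proof -
    from v have "v k \<in> limiting_subdiff h (p k)" by blast
    then obtain xs vs where pk: "p k \<in> edom h" and xs: "xs \<longlonglongrightarrow> p k"
      and hx: "(\<lambda>j. h (xs j)) \<longlonglongrightarrow> h (p k)" and fr: "\<forall>j. vs j \<in> frechet_subdiff h (xs j)"
      and vs: "vs \<longlonglongrightarrow> v k"
      unfolding limiting_subdiff_def by blast
    define e where "e = 1/(real k+1)"
    have e: "e > 0" by (simp add: e_def)
    define c0 where "c0 = real_of_ereal (h (p k))"
    have hpk: "h (p k) = ereal c0" using pk hm unfolding edom_def c0_def by (cases "h (p k)") auto
    have ev1: "eventually (\<lambda>j. norm (xs j - p k) < e) sequentially"
      using xs e by (simp add: tendsto_iff dist_norm)
    have ev3: "eventually (\<lambda>j. norm (vs j - v k) < e) sequentially"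
      using vs e by (simp add: tendsto_iff dist_norm)
    have ev2a: "eventually (\<lambda>j. h (xs j) < ereal (c0 + e)) sequentially"
      using order_tendstoD(2)[OF hx, of "ereal (c0 + e)"] hpk e by simp
    have ev2b: "eventually (\<lambda>j. ereal (c0 - e) < h (xs j)) sequentially"
      using order_tendstoD(1)[OF hx, of "ereal (c0 - e)"] hpk e by simp
    have "eventually (\<lambda>j. norm (xs j - p k) < e \<and> norm (vs j - v k) < e \<and>
        h (xs j) < ereal (c0 + e) \<and> ereal (c0 - e) < h (xs j)) sequentially"
      using ev1 ev2a ev2b ev3 by eventually_elim auto
    then obtain j where j: "norm (xs j - p k) < e" "norm (vs j - v k) < e"
        "h (xs j) < ereal (c0 + e)" "ereal (c0 - e) < h (xs j)"
      unfolding eventually_sequentially by blast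
    then obtain c where c: "h (xs j) = ereal c" by (cases "h (xs j)") auto
    show ?thesis
      apply (rule exI[of _ "xs j"], rule exI[of _ "vs j"], rule exI[of _ c])
      using j c fr unfolding e_def c0_def[symmetric] by auto
  qed
  then have "\<forall>k. \<exists>q w c. w \<in> frechet_subdiff h q \<and> norm (q - p k) < 1/(real k+1) \<and> h q = ereal c
     \<and> \<bar>c - real_of_ereal (h (p k))\<bar> < 1/(real k+1) \<and> norm (w - v k) < 1/(real k+1)" by blast
  then obtain Q W C where QWC: "\<forall>k. W k \<in> frechet_subdiff h (Q k) \<and> norm (Q k - p k) < 1/(real k+1) \<and> h (Q k) = ereal (C k)
     \<and> \<bar>C k - real_of_ereal (h (p k))\<bar> < 1/(real k+1) \<and> norm (W k - v k) < 1/(real k+1)"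
    by metis
  have a1: "\<forall>k. norm (Q k - p k) \<le> 1/(real k+1)" using QWC less_imp_le by blast
  have a2: "\<forall>k. norm (W k - v k) \<le> 1/(real k+1)" using QWC less_imp_le by blast
  have a3: "\<forall>k. norm (C k - real_of_ereal (h (p k))) \<le> 1/(real k+1)" using QWC less_imp_le
    unfolding real_norm_def by blast
  have d1: "(\<lambda>k. Q k - p k) \<longlonglongrightarrow> 0"
    by (rule Lim_null_comparison[OF always_eventually[OF a1] inv_lim])
  have d2: "(\<lambda>k. W k - v k) \<longlonglongrightarrow> 0"
    by (rule Lim_null_comparison[OF always_eventually[OF a2] inv_lim])
  have d3: "(\<lambda>k. C k - real_of_ereal (h (p k))) \<longlonglongrightarrow> 0"
    by (rule Lim_null_comparison[OF always_eventually[OF a3] inv_lim])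
  have Qz: "Q \<longlonglongrightarrow> z" using tendsto_add[OF d1 p] by simp
  have W0: "W \<longlonglongrightarrow> 0" using tendsto_add[OF d2 v0] by simp
  have fin: "h (p k) = ereal (real_of_ereal (h (p k)))" for k
  proof -
    have "p k \<in> edom h" using v unfolding limiting_subdiff_def by blast
    then show ?thesis using hm unfolding edom_def by (cases "h (p k)") auto
  qed
  have finz: "h z = ereal (real_of_ereal (h z))"
    using z hm unfolding edom_def by (cases "h z") auto
  have "(\<lambda>k. ereal (real_of_ereal (h (p k)))) \<longlonglongrightarrow> ereal (real_of_ereal (h z))"
  proof -
    have eq: "(\<lambda>k. ereal (real_of_ereal (h (p k)))) = (\<lambda>k. h (p k))"
      by (rule ext, rule fin[symmetric])
    show ?thesis unfolding eq by (subst finz[symmetric]) (rule hp)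
  qed
  then have R: "(\<lambda>k. real_of_ereal (h (p k))) \<longlonglongrightarrow> real_of_ereal (h z)" by simp
  have "(\<lambda>k. C k) \<longlonglongrightarrow> real_of_ereal (h z)" using tendsto_add[OF d3 R] by simp
  then have "(\<lambda>k. ereal (C k)) \<longlonglongrightarrow> h z" by (subst finz) (simp only: lim_ereal)
  then have hQ: "(\<lambda>k. h (Q k)) \<longlonglongrightarrow> h z" using QWC by simp
  show ?thesis unfolding limiting_subdiff_def
    using z Qz hQ W0 QWC by blast
qed

lemma sm: "(a *\<^sub>R mat 1) *v (d::real^'n) = a *\<^sub>R d"
  by (simp add: vec_eq_iff matrix_vector_mult_def mat_def if_distrib[of "\<lambda>f. f _"] cong: if_cong) (simp add: if_distrib[of "\<lambda>t. a * t * _"] cong: if_cong)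

lemma wn: "wnorm2 (T - L - a *\<^sub>R mat 1) d = wnorm2 T d - wnorm2 L d - a * (d \<bullet> d)"
  unfolding wnorm2_def by (simp add: matrix_vector_mult_diff_rdistrib inner_diff_right sm)

theorem mainTheorem4:
  fixes g :: "real^'n \<Rightarrow> ereal"
    and f :: "real^'n \<Rightarrow> real"
    and gradf :: "real^'n \<Rightarrow> real^'n"
    and L :: "real^'n^'n"
    and a :: real
    and x0 :: "real^'n"
    and D :: "nat \<Rightarrow> real^'r^'n"
    and x :: "nat \<Rightarrow> real^'n"
    and \<beta> :: "nat \<Rightarrow> real^'r"
    and Lk Tk :: "nat \<Rightarrow> real^'n^'n"
  assumes g_proper: "proper_fun g"
    and g_lsc: "lsc g"
    and f_grad: "\<forall>z. (f has_derivative (\<lambda>h. gradf z \<bullet> h)) (at z)"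
    and f_C1: "continuous_on UNIV gradf"
    and L_pd: "pd_mat L"
    and L_lip: "\<exists>G. (\<forall>z. ((\<lambda>u. f (inv_sqrt_mat L *v u)) has_derivative (\<lambda>h. G z \<bullet> h)) (at z))
                    \<and> lipschitz_on 1 UNIV G"
    and fg_bdd: "\<exists>c. \<forall>z. ereal c \<le> ereal (f z) + g z"
    and a_pos: "a > 0"
    and x_init: "x 0 = x0"
    and Lk_sym: "\<forall>k. transpose (Lk k) = Lk k"
    and Tk_sym: "\<forall>k. transpose (Tk k) = Tk k"
    and descent: "\<forall>k. let y = x k + D k *v \<beta> k in
        g (x (Suc k)) + ereal (f y + gradf y \<bullet> (x (Suc k) - y)
          + 1/2 * wnorm2 (Tk k) (x (Suc k) - y)) \<le> ereal (f (x k)) + g (x k)"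
    and T_L: "\<forall>k. psd_mat (Tk k - Lk k - a *\<^sub>R mat 1)"
    and local_lip: "\<forall>k. let y = x k + D k *v \<beta> k in
        f (x (Suc k)) \<le> f y + gradf y \<bullet> (x (Suc k) - y) + 1/2 * wnorm2 (Lk k) (x (Suc k) - y)"
    and T_bdd: "bounded (range Tk)"
  shows "antimono (\<lambda>k. ereal (f (x k)) + g (x k))
    \<and> ((continuous_on (edom g) g
         \<and> (\<lambda>k. dist0 (limiting_subdiff (\<lambda>z. ereal (f z) + g z) (x (Suc k)))) \<longlonglongrightarrow> 0)
       \<longrightarrow> (\<forall>z. limit_point (\<lambda>k. x (Suc k)) z \<longrightarrow> stationary (\<lambda>z. ereal (f z) + g z) z))"
proof -
  let ?F = "\<lambda>z. ereal (f z) + g z"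
  have step: "ereal (f (x (Suc k))) + g (x (Suc k)) \<le> ereal (f (x k)) + g (x k)" for k
  proof -
    define y where "y = x k + D k *v \<beta> k"
    define d where "d = x (Suc k) - y"
    have de: "g (x (Suc k)) + ereal (f y + gradf y \<bullet> d + 1/2 * wnorm2 (Tk k) d) \<le> ereal (f (x k)) + g (x k)"
      using descent unfolding y_def d_def Let_def by blast
    have ll: "f (x (Suc k)) \<le> f y + gradf y \<bullet> d + 1/2 * wnorm2 (Lk k) d"
      using local_lip unfolding y_def d_def Let_def by blast
    have "0 \<le> wnorm2 (Tk k - Lk k - a *\<^sub>R mat 1) d"
      using T_L unfolding psd_mat_def wnorm2_def by blast
    moreover have "0 \<le> a * (d \<bullet> d)" using a_pos by simp
    ultimately have "wnorm2 (Lk k) d \<le> wnorm2 (Tk k) d" unfolding wn by linarith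
    with ll have "f (x (Suc k)) \<le> f y + gradf y \<bullet> d + 1/2 * wnorm2 (Tk k) d" by linarith
    then have "ereal (f (x (Suc k))) + g (x (Suc k)) \<le> ereal (f y + gradf y \<bullet> d + 1/2 * wnorm2 (Tk k) d) + g (x (Suc k))"
      by (intro add_right_mono) simp
    also have "\<dots> \<le> ereal (f (x k)) + g (x k)" using de by (simp add: add.commute)
    finally show ?thesis .
  qed
  have anti: "antimono (\<lambda>k. ereal (f (x k)) + g (x k))"
    unfolding decseq_Suc_iff using step by blast
  have gm: "\<forall>z. g z \<noteq> -\<infinity>" using g_proper unfolding proper_fun_def by blast
  have Fm: "\<forall>z. ?F z \<noteq> -\<infinity>" using gm by simp
  have edomF: "z \<in> edom ?F \<longleftrightarrow> z \<in> edom g" for z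
    unfolding edom_def by (cases "g z") auto
  have fcont: "isCont f z" for z
    using f_grad has_derivative_continuous by blast
  have part2: "stationary ?F z"
    if cont: "continuous_on (edom g) g"
      and lim: "(\<lambda>k. dist0 (limiting_subdiff ?F (x (Suc k)))) \<longlonglongrightarrow> 0"
      and lp: "limit_point (\<lambda>k. x (Suc k)) z" for z
  proof -
    define S where "S k = limiting_subdiff ?F (x (Suc k))" for k
    obtain r where r: "strict_mono r" and rz: "(\<lambda>k. x (Suc (r k))) \<longlonglongrightarrow> z"
      using lp unfolding limit_point_def comp_def by blast
    have "eventually (\<lambda>k. dist0 (S k) < 1) sequentially"
      using order_tendstoD(2)[OF lim, of 1] unfolding S_def by simp
    then obtain N0 where N0: "\<forall>k\<ge>N0. dist0 (S k) < 1"
      unfolding eventually_sequentially by blast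
    have Sne: "S k \<noteq> {}" if "k \<ge> N0" for k
      using N0 that unfolding dist0_def by (metis ereal_less_eq(1) leD)
    have ev: "eventually (\<lambda>k. ereal (infdist 0 (S k)) = dist0 (S k)) sequentially"
      unfolding eventually_sequentially using Sne unfolding dist0_def by auto
    have lim': "(\<lambda>k. dist0 (S k)) \<longlonglongrightarrow> ereal 0"
      using lim unfolding S_def zero_ereal_def .
    have "(\<lambda>k. ereal (infdist 0 (S k))) \<longlonglongrightarrow> ereal 0"
      by (subst tendsto_cong[OF ev]) (rule lim')
    then have inf: "(\<lambda>k. infdist 0 (S k)) \<longlonglongrightarrow> 0" by (simp only: lim_ereal)
    have exu: "\<exists>u. u \<in> S k \<and> norm u < infdist 0 (S k) + 1/(real k+1)" if "k \<ge> N0" for k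
    proof -
      have ne: "S k \<noteq> {}" using Sne that .
      have "(INF a\<in>S k. dist 0 a) < infdist 0 (S k) + 1/(real k+1)"
        using infdist_notempty[OF ne] by simp
      moreover have "bdd_below ((\<lambda>a. dist 0 a) ` S k)"
        by (rule bdd_belowI[of _ 0]) auto
      ultimately obtain u where "u \<in> S k" "dist 0 u < infdist 0 (S k) + 1/(real k+1)"
        using cINF_less_iff[OF ne] by blast
      then show ?thesis by auto
    qed
    define v where "v k = (SOME u. u \<in> S k \<and> norm u < infdist 0 (S k) + 1/(real k+1))" for k
    have hv: "v k \<in> S k \<and> norm (v k) < infdist 0 (S k) + 1/(real k+1)" if "k \<ge> N0" for k
      unfolding v_def by (rule someI_ex[OF exu[OF that]])
    have v0: "v \<longlonglongrightarrow> 0"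
    proof (rule Lim_null_comparison)
      show "eventually (\<lambda>k. norm (v k) \<le> infdist 0 (S k) + 1/(real k+1)) sequentially"
        unfolding eventually_sequentially using hv less_imp_le by blast
      show "(\<lambda>k. infdist 0 (S k) + 1/(real k+1)) \<longlonglongrightarrow> 0"
        using tendsto_add[OF inf inv_lim] by simp
    qed
    define s where "s k = r (k + N0)" for k
    have s: "strict_mono s" using r unfolding s_def strict_mono_def by simp
    have sN: "s k \<ge> N0" for k
      using seq_suble[OF r, of "k + N0"] unfolding s_def by simp
    define p where "p k = x (Suc (s k))" for k
    have p: "p \<longlonglongrightarrow> z"
      using LIMSEQ_ignore_initial_segment[OF rz, of N0] unfolding p_def s_def by simp
    have w0: "(v \<circ> s) \<longlonglongrightarrow> 0" by (rule LIMSEQ_subseq_LIMSEQ[OF v0 s])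
    have w: "\<forall>k. (v \<circ> s) k \<in> limiting_subdiff ?F (p k)"
      using hv sN unfolding p_def S_def by auto
    have pe: "p k \<in> edom g" for k
      using w edomF unfolding limiting_subdiff_def by blast
    have bound: "?F (p k) \<le> ?F (p 0)" for k
      unfolding p_def by (rule antimonoD[OF anti]) (use strict_mono_less_eq[OF s] in simp)
    obtain M where M: "?F (p 0) = ereal M"
      using pe[of 0] gm unfolding edom_def by (cases "g (p 0)") auto
    have fp: "(\<lambda>k. f (p k)) \<longlonglongrightarrow> f z"
      by (rule isCont_tendsto_compose[OF fcont p])
    have zg: "z \<in> edom g"
    proof (rule ccontr)
      assume "z \<notin> edom g"
      then have gz: "g z = \<infinity>" unfolding edom_def by simp
      define B where "B = ereal (M - f z + 1)"
      have "\<infinity> \<le> Liminf (at z) g" using g_lsc gz unfolding lsc_def by metis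
      then have "eventually (\<lambda>u. B < g u) (at z)"
        unfolding le_Liminf_iff B_def by simp
      then obtain d where d: "d > 0" "\<forall>u. u \<noteq> z \<and> dist u z < d \<longrightarrow> B < g u"
        unfolding eventually_at by auto
      have e1: "eventually (\<lambda>k. dist (p k) z < d) sequentially"
        using p d(1) by (simp add: tendsto_iff)
      have e2: "eventually (\<lambda>k. f z - 1 < f (p k)) sequentially"
        using order_tendstoD(1)[OF fp, of "f z - 1"] by simp
      obtain k where k: "dist (p k) z < d" "f z - 1 < f (p k)"
        using eventually_conj[OF e1 e2] unfolding eventually_sequentially by blast
      obtain t where t: "g (p k) = ereal t"
        using pe[of k] gm unfolding edom_def by (cases "g (p k)") auto
      have "ereal (f (p k)) + g (p k) \<le> ereal M" using bound[of k] M by simp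
      then have "t \<le> M - f (p k)" using t by simp
      then have tB: "ereal t < B" using k(2) unfolding B_def by simp
      show False
      proof (cases "p k = z")
        case True then show ?thesis using t gz by simp
      next
        case False then show ?thesis using d(2) k(1) tB t by fastforce
      qed
    qed
    have gp: "(\<lambda>k. g (p k)) \<longlonglongrightarrow> g z"
      by (rule continuous_on_tendsto_compose[OF cont p zg]) (use pe in simp)
    have gzf: "\<bar>g z\<bar> \<noteq> \<infinity>" using zg gm unfolding edom_def by (cases "g z") auto
    have Fp: "(\<lambda>k. ?F (p k)) \<longlonglongrightarrow> ?F z"
      by (rule tendsto_add_ereal[OF _ gzf _ gp]) (use fp in simp_all)
    have "0 \<in> limiting_subdiff ?F z"
      by (rule diag[OF Fm p Fp _ w w0]) (use zg edomF in blast)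
    then show ?thesis unfolding stationary_def .
  qed
  show ?thesis using anti part2 by blast
qed

end
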